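(* Let $k_0\in\mathbb{R}$, let $w\in C^2(\mathbb{R})$ be real-valued with $\lim_{x\to\pm\infty}w(x)=\mp k_0$ and $\lim_{x\to\pm\infty}w'(x)=0$, and $U=-w^2-iw'+k_0^2$. Let $k_\star\in\mathbb{R}\setminus\{0,\pm k_0\}$ and $\rho_\star>0$. Suppose $\psi_{\rm las}$ and $\psi_{\rm CPA}$ are solutions of $-\psi''+U\psi=k_\star^2\psi$ such that, together with their first derivatives, $$\psi_{\rm las}(x)\sim a_\pm e^{\pm ik_\star x},\qquad \psi_{\rm CPA}(x)\sim c_\pm e^{\mp ik_\star x}\qquad (x\to\pm\infty),$$ with $|a_+|=|a_-|=|c_+|=|c_-|=\rho_\star$. Then for all $x\in\mathbb{R}$, $$|\psi_{\rm CPA}(x)|^2+|\psi_{\rm las}(x)|^2+\frac{k_0}{k_\star}\big(|\psi_{\rm las}(x)|^2-|\psi_{\rm CPA}(x)|^2\big)=2\rho_\star^2.$$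
   Context: "$f(x)\sim a e^{i\kappa x}$ together with the first derivative" means $f(x)-ae^{i\kappa x}\to0$ and $f'(x)-i\kappa a e^{i\kappa x}\to0$. Such $\psi_{\rm las},\psi_{\rm CPA}$ are the laser (outgoing) and coherent-perfect-absorber (incoming) solutions at a self-dual spectral singularity $k_\star$. *)

theory Defs
  imports "HOL-Analysis.Analysis"
begin

definition C2_real :: "(real \<Rightarrow> real) \<Rightarrow> (real \<Rightarrow> real) \<Rightarrow> (real \<Rightarrow> real) \<Rightarrow> bool" where
  "C2_real w w1 w2 \<longleftrightarrow>
     (\<forall>x. (w has_real_derivative w1 x) (at x)) \<and>
     (\<forall>x. (w1 has_real_derivative w2 x) (at x)) \<and> continuous_on UNIV w2"

definition potU :: "(real \<Rightarrow> real) \<Rightarrow> (real \<Rightarrow> real) \<Rightarrow> real \<Rightarrow> real \<Rightarrow> complex" where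
  "potU w w1 k0 x = - complex_of_real ((w x)\<^sup>2) - \<i> * complex_of_real (w1 x) + complex_of_real (k0\<^sup>2)"

definition solves_schr :: "(real \<Rightarrow> complex) \<Rightarrow> real \<Rightarrow> (real \<Rightarrow> complex) \<Rightarrow> (real \<Rightarrow> complex)
    \<Rightarrow> (real \<Rightarrow> complex) \<Rightarrow> bool" where
  "solves_schr U k psi psi1 psi2 \<longleftrightarrow>
     (\<forall>x. (psi has_vector_derivative psi1 x) (at x)) \<and>
     (\<forall>x. (psi1 has_vector_derivative psi2 x) (at x)) \<and>
     (\<forall>x. - psi2 x + U x * psi x = complex_of_real (k\<^sup>2) * psi x)"

definition asymp_exp :: "(real \<Rightarrow> complex) \<Rightarrow> (real \<Rightarrow> complex) \<Rightarrow> complex \<Rightarrow> real \<Rightarrow> real filter \<Rightarrow> bool" where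
  "asymp_exp f f1 a \<kappa> F \<longleftrightarrow>
     ((\<lambda>x. f x - a * exp (\<i> * complex_of_real (\<kappa> * x))) \<longlongrightarrow> 0) F \<and>
     ((\<lambda>x. f1 x - \<i> * complex_of_real \<kappa> * a * exp (\<i> * complex_of_real (\<kappa> * x))) \<longlongrightarrow> 0) F"

end

theory Submission imports Defs begin

definition SS :: "real \<Rightarrow> (real\<Rightarrow>real) \<Rightarrow> (real\<Rightarrow>complex) \<Rightarrow> (real\<Rightarrow>complex) \<Rightarrow> (real\<Rightarrow>complex) \<Rightarrow> (real\<Rightarrow>complex) \<Rightarrow> real \<Rightarrow> complex" where
"SS \<kappa> w f f1 g g1 x = of_real \<kappa> * f x * cnj (g x) + (f1 x + \<i> * of_real (w x) * f x) * cnj (g1 x + \<i> * of_real (w x) * g x)"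

lemma SS_deriv:
  assumes w: "\<And>x. (w has_real_derivative w1 x) (at x)"
    and f: "solves_schr (potU w w1 k0) k f f1 f2"
    and g: "solves_schr (potU w w1 k0) k g g1 g2"
  shows "(SS (k\<^sup>2 - k0\<^sup>2) w f f1 g g1 has_vector_derivative 0) (at x)"
proof -
  from f have f1: "(f has_vector_derivative f1 x) (at x)" and f2: "(f1 has_vector_derivative f2 x) (at x)"
    and fe: "- f2 x + potU w w1 k0 x * f x = complex_of_real (k\<^sup>2) * f x" by (auto simp: solves_schr_def)
  from g have g1: "(g has_vector_derivative g1 x) (at x)" and g2: "(g1 has_vector_derivative g2 x) (at x)"
    and ge: "- g2 x + potU w w1 k0 x * g x = complex_of_real (k\<^sup>2) * g x" by (auto simp: solves_schr_def)
  have f2e: "f2 x = potU w w1 k0 x * f x - complex_of_real (k\<^sup>2) * f x" using fe by (simp add: algebra_simps)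
  have g2e: "g2 x = potU w w1 k0 x * g x - complex_of_real (k\<^sup>2) * g x" using ge by (simp add: algebra_simps)
  have wv: "((\<lambda>x. complex_of_real (w x)) has_vector_derivative of_real (w1 x)) (at x)"
    by (rule has_vector_derivative_of_real[OF w])
  show ?thesis
    unfolding SS_def[abs_def]
    apply (rule derivative_eq_intros f1 f2 g1 g2 wv w refl)+
    apply (simp add: f2e g2e potU_def)
    apply (simp add: algebra_simps power2_eq_square)
    done
qed

lemma SS_const:
  assumes w: "\<And>x. (w has_real_derivative w1 x) (at x)"
    and f: "solves_schr (potU w w1 k0) k f f1 f2"
    and g: "solves_schr (potU w w1 k0) k g g1 g2"
  shows "SS (k\<^sup>2 - k0\<^sup>2) w f f1 g g1 x = SS (k\<^sup>2 - k0\<^sup>2) w f f1 g g1 0"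
proof -
  obtain c where "\<And>x. x \<in> UNIV \<Longrightarrow> SS (k\<^sup>2 - k0\<^sup>2) w f f1 g g1 x = c"
    using has_vector_derivative_zero_constant[of UNIV "SS (k\<^sup>2 - k0\<^sup>2) w f f1 g g1"]
      SS_deriv[OF w f g] by auto
  then show ?thesis by simp
qed

lemma asym_p:
  assumes "asymp_exp f f1 a m F"
  shows "((\<lambda>x. f x * exp (- (\<i> * complex_of_real (m * x)))) \<longlongrightarrow> a) F"
    and "((\<lambda>x. f1 x * exp (- (\<i> * complex_of_real (m * x)))) \<longlongrightarrow> \<i> * complex_of_real m * a) F"
proof -
  define E where "E x = exp (\<i> * complex_of_real (m * x))" for x
  define E' where "E' x = exp (- (\<i> * complex_of_real (m * x)))" for x
  have EE: "E x * E' x = 1" for x unfolding E_def E'_def by (simp add: exp_minus_inverse)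
  have nE: "norm (E' x) = 1" for x unfolding E'_def
    by (metis norm_exp_i_times of_real_minus mult_minus_left mult.commute mult_minus_right)
  from assms have h1: "((\<lambda>x. f x - a * E x) \<longlongrightarrow> 0) F"
    and h2: "((\<lambda>x. f1 x - \<i> * complex_of_real m * a * E x) \<longlongrightarrow> 0) F"
    unfolding asymp_exp_def E_def by auto
  have "((\<lambda>x. (f x - a * E x) * E' x) \<longlongrightarrow> 0) F"
    using h1 by (subst tendsto_norm_zero_iff[symmetric]) (simp add: norm_mult nE tendsto_norm_zero_iff)
  then have "((\<lambda>x. (f x - a * E x) * E' x + a) \<longlongrightarrow> 0 + a) F"
    by (intro tendsto_intros)
  moreover have "(f x - a * E x) * E' x + a = f x * E' x" for x
    using EE[of x] by (simp add: algebra_simps)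
  ultimately show "((\<lambda>x. f x * exp (- (\<i> * complex_of_real (m * x)))) \<longlongrightarrow> a) F"
    unfolding E'_def by simp
  have "((\<lambda>x. (f1 x - \<i> * complex_of_real m * a * E x) * E' x) \<longlongrightarrow> 0) F"
    using h2 by (subst tendsto_norm_zero_iff[symmetric]) (simp add: norm_mult nE tendsto_norm_zero_iff)
  then have "((\<lambda>x. (f1 x - \<i> * complex_of_real m * a * E x) * E' x + \<i> * complex_of_real m * a)
      \<longlongrightarrow> 0 + \<i> * complex_of_real m * a) F"
    by (intro tendsto_intros)
  moreover have "(f1 x - \<i> * complex_of_real m * a * E x) * E' x + \<i> * complex_of_real m * a = f1 x * E' x" for x
    using EE[of x] by (simp add: algebra_simps)
  ultimately show "((\<lambda>x. f1 x * exp (- (\<i> * complex_of_real (m * x)))) \<longlongrightarrow> \<i> * complex_of_real m * a) F"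
    unfolding E'_def by simp
qed

lemma SS_factor:
  assumes "f x = pf x * Ef" "f1 x = pf1 x * Ef" "g x = pg x * Eg" "g1 x = pg1 x * Eg"
  shows "SS \<kappa> w f f1 g g1 x = (Ef * cnj Eg) * SS \<kappa> w pf pf1 pg pg1 x"
  using assms unfolding SS_def by (simp add: algebra_simps)

lemma SS_diag: "SS \<kappa> w f f1 f f1 x = of_real (\<kappa> * (norm (f x))\<^sup>2 + (norm (f1 x + \<i> * of_real (w x) * f x))\<^sup>2)"
  unfolding SS_def of_real_add of_real_mult complex_norm_square by (simp add: mult.assoc)

lemma pdecomp: "f x = (f x * exp (- (\<i> * complex_of_real (m * x)))) * exp (\<i> * complex_of_real (m * x))"
  by (simp add: mult.assoc exp_minus_inverse mult.commute[of "exp (- _)"])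


lemma unit_exp: "exp (\<i> * complex_of_real t) * cnj (exp (\<i> * complex_of_real t)) = 1"
  by (metis complex_norm_square norm_exp_i_times of_real_1 power_one)

lemma final_alg:
  fixes k k0 rho a b c d kap :: real
  assumes "kap = k\<^sup>2 - k0\<^sup>2" "kap \<noteq> 0" "k \<noteq> 0" "rho > 0"
    and "kap * a + b = 2*k*rho\<^sup>2*(k-k0)" "kap * c + d = 2*k*rho\<^sup>2*(k+k0)"
    and "kap\<^sup>2 * c * a = d * b"
  shows "c + a + (k0/k) * (a - c) = 2 * rho\<^sup>2"
proof -
  define P where "P = 2*k*rho\<^sup>2*(k-k0)"
  define R where "R = 2*k*rho\<^sup>2*(k+k0)"
  have b: "b = P - kap*a" and d: "d = R - kap*c" using assms(5,6) P_def R_def by auto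
  have "kap\<^sup>2 * c * a = (R - kap*c)*(P - kap*a)" using assms(7) b d by simp
  then have "P*R = kap * (a*R + c*P)" by (simp add: algebra_simps power2_eq_square)
  moreover have "P*R = kap * (4*k\<^sup>2*rho^4)" unfolding P_def R_def assms(1)
    by (simp add: algebra_simps power2_eq_square power4_eq_xxxx)
  ultimately have "a*R + c*P = 4*k\<^sup>2*rho^4" using assms(2) by simp
  then have "(2*k*rho\<^sup>2) * ((k+k0)*a + (k-k0)*c) = (2*k*rho\<^sup>2) * (2*k*rho\<^sup>2)"
    unfolding P_def R_def by (simp add: algebra_simps power2_eq_square power4_eq_xxxx)
  moreover have "2*k*rho\<^sup>2 \<noteq> 0" using assms by simp
  ultimately have e: "(k+k0)*a + (k-k0)*c = 2*k*rho\<^sup>2" by simp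
  have "c + a + (k0/k) * (a - c) = ((k+k0)*a + (k-k0)*c)/k" using assms(3)
    by (simp add: field_simps)
  also have "\<dots> = 2 * rho\<^sup>2" using e assms(3) by simp
  finally show ?thesis .
qed

theorem mainTheorem7:
  fixes k0 kstar rho :: real
    and w w1 w2 :: "real \<Rightarrow> real"
    and psil psil1 psil2 psic psic1 psic2 :: "real \<Rightarrow> complex"
    and ap am cp cm :: complex
  assumes "C2_real w w1 w2"
    and "(w \<longlongrightarrow> - k0) at_top" and "(w \<longlongrightarrow> k0) at_bot"
    and "(w1 \<longlongrightarrow> 0) at_top" and "(w1 \<longlongrightarrow> 0) at_bot"
    and "kstar \<noteq> 0" and "kstar \<noteq> k0" and "kstar \<noteq> - k0"
    and "rho > 0"
    and "solves_schr (potU w w1 k0) kstar psil psil1 psil2"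
    and "solves_schr (potU w w1 k0) kstar psic psic1 psic2"
    and "asymp_exp psil psil1 ap kstar at_top"
    and "asymp_exp psil psil1 am (- kstar) at_bot"
    and "asymp_exp psic psic1 cp (- kstar) at_top"
    and "asymp_exp psic psic1 cm kstar at_bot"
    and "norm ap = rho" and "norm am = rho" and "norm cp = rho" and "norm cm = rho"
  shows "\<forall>x::real. (norm (psic x))\<^sup>2 + (norm (psil x))\<^sup>2
            + (k0 / kstar) * ((norm (psil x))\<^sup>2 - (norm (psic x))\<^sup>2) = 2 * rho\<^sup>2"
proof
  fix x :: real
  define kap where "kap = kstar\<^sup>2 - k0\<^sup>2"
  have kap0: "kap \<noteq> 0" unfolding kap_def using assms(7,8)
    by (metis eq_iff_diff_eq_0 power2_eq_iff)
  have wd: "\<And>x. (w has_real_derivative w1 x) (at x)" using assms(1) by (simp add: C2_real_def)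
  define El where "El x = exp (\<i> * complex_of_real (kstar * x))" for x
  define Ec where "Ec x = exp (\<i> * complex_of_real (- kstar * x))" for x
  define pl where "pl x = psil x * exp (- (\<i> * complex_of_real (kstar * x)))" for x
  define pl1 where "pl1 x = psil1 x * exp (- (\<i> * complex_of_real (kstar * x)))" for x
  define pc where "pc x = psic x * exp (- (\<i> * complex_of_real (- kstar * x)))" for x
  define pc1 where "pc1 x = psic1 x * exp (- (\<i> * complex_of_real (- kstar * x)))" for x
  have l_dec: "psil y = pl y * El y" "psil1 y = pl1 y * El y" for y
    unfolding pl_def pl1_def El_def by (rule pdecomp)+
  have c_dec: "psic y = pc y * Ec y" "psic1 y = pc1 y * Ec y" for y
    unfolding pc_def pc1_def Ec_def by (rule pdecomp)+
  have tl: "(pl \<longlongrightarrow> ap) at_top" "(pl1 \<longlongrightarrow> \<i> * complex_of_real kstar * ap) at_top"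
    using asym_p[OF assms(12)] unfolding pl_def[abs_def] pl1_def[abs_def] by auto
  have tc: "(pc \<longlongrightarrow> cp) at_top" "(pc1 \<longlongrightarrow> \<i> * complex_of_real (- kstar) * cp) at_top"
    using asym_p[OF assms(14)] unfolding pc_def[abs_def] pc1_def[abs_def] by auto
  have tw: "((\<lambda>x. complex_of_real (w x)) \<longlongrightarrow> complex_of_real (- k0)) at_top"
    by (rule tendsto_of_real[OF assms(2)])
  have apn: "ap * cnj ap = of_real (rho\<^sup>2)" using assms(16) complex_norm_square by metis
  have cpn: "cp * cnj cp = of_real (rho\<^sup>2)" using assms(18) complex_norm_square by metis
  have Sll: "SS kap w psil psil1 psil psil1 y = SS kap w pl pl1 pl pl1 y" for y
  proof -
    have "SS kap w psil psil1 psil psil1 y = (El y * cnj (El y)) * SS kap w pl pl1 pl pl1 y"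
      by (rule SS_factor; rule l_dec)
    then show ?thesis using unit_exp[of "kstar * y"] unfolding El_def by simp
  qed
  have Sll_c: "SS kap w psil psil1 psil psil1 y = SS kap w psil psil1 psil psil1 0" for y
    unfolding kap_def by (rule SS_const[OF wd assms(10) assms(10)])
  have limll: "((\<lambda>y. SS kap w pl pl1 pl pl1 y) \<longlongrightarrow>
      of_real kap * ap * cnj ap + (\<i> * complex_of_real kstar * ap + \<i> * complex_of_real (- k0) * ap)
        * cnj (\<i> * complex_of_real kstar * ap + \<i> * complex_of_real (- k0) * ap)) at_top"
    unfolding SS_def by (intro tendsto_intros tl tw)
  have Vll: "of_real kap * ap * cnj ap + (\<i> * complex_of_real kstar * ap + \<i> * complex_of_real (- k0) * ap)
        * cnj (\<i> * complex_of_real kstar * ap + \<i> * complex_of_real (- k0) * ap)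
      = of_real (kap + (kstar - k0)\<^sup>2) * (ap * cnj ap)"
    by (simp add: algebra_simps power2_eq_square)
  have "((\<lambda>y::real. SS kap w psil psil1 psil psil1 0) \<longlongrightarrow> of_real (kap + (kstar - k0)\<^sup>2) * of_real (rho\<^sup>2)) at_top"
  proof -
    have fn: "SS kap w pl pl1 pl pl1 = (\<lambda>y. SS kap w psil psil1 psil psil1 0)" by (intro ext) (metis Sll Sll_c)
    show ?thesis using limll unfolding fn Vll apn .
  qed
  then have Cll: "SS kap w psil psil1 psil psil1 0 = of_real ((kap + (kstar - k0)\<^sup>2) * rho\<^sup>2)"
    using tendsto_const_iff[OF trivial_limit_at_top_linorder] by (metis of_real_mult)
  have E1: "kap * (norm (psil x))\<^sup>2 + (norm (psil1 x + \<i> * of_real (w x) * psil x))\<^sup>2 = 2*kstar*rho\<^sup>2*(kstar-k0)"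
  proof -
    have "of_real (kap * (norm (psil x))\<^sup>2 + (norm (psil1 x + \<i> * of_real (w x) * psil x))\<^sup>2)
       = (of_real ((kap + (kstar - k0)\<^sup>2) * rho\<^sup>2) :: complex)"
      using Sll_c[of x] Cll SS_diag by metis
    then have "kap * (norm (psil x))\<^sup>2 + (norm (psil1 x + \<i> * of_real (w x) * psil x))\<^sup>2 = (kap + (kstar - k0)\<^sup>2) * rho\<^sup>2"
      using of_real_eq_iff by blast
    then show ?thesis unfolding kap_def by (simp add: algebra_simps power2_eq_square)
  qed
  have Scc: "SS kap w psic psic1 psic psic1 y = SS kap w pc pc1 pc pc1 y" for y
  proof -
    have "SS kap w psic psic1 psic psic1 y = (Ec y * cnj (Ec y)) * SS kap w pc pc1 pc pc1 y"
      by (rule SS_factor; rule c_dec)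
    then show ?thesis using unit_exp[of "- kstar * y"] unfolding Ec_def by simp
  qed
  have Scc_c: "SS kap w psic psic1 psic psic1 y = SS kap w psic psic1 psic psic1 0" for y
    unfolding kap_def by (rule SS_const[OF wd assms(11) assms(11)])
  have limcc: "((\<lambda>y. SS kap w pc pc1 pc pc1 y) \<longlongrightarrow>
      of_real kap * cp * cnj cp + (\<i> * complex_of_real (- kstar) * cp + \<i> * complex_of_real (- k0) * cp)
        * cnj (\<i> * complex_of_real (- kstar) * cp + \<i> * complex_of_real (- k0) * cp)) at_top"
    unfolding SS_def by (intro tendsto_intros tc tw)
  have Vcc: "of_real kap * cp * cnj cp + (\<i> * complex_of_real (- kstar) * cp + \<i> * complex_of_real (- k0) * cp)
        * cnj (\<i> * complex_of_real (- kstar) * cp + \<i> * complex_of_real (- k0) * cp)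
      = of_real (kap + (kstar + k0)\<^sup>2) * (cp * cnj cp)"
    by (simp add: algebra_simps power2_eq_square)
  have "((\<lambda>y::real. SS kap w psic psic1 psic psic1 0) \<longlongrightarrow> of_real (kap + (kstar + k0)\<^sup>2) * of_real (rho\<^sup>2)) at_top"
  proof -
    have fn: "SS kap w pc pc1 pc pc1 = (\<lambda>y. SS kap w psic psic1 psic psic1 0)" by (intro ext) (metis Scc Scc_c)
    show ?thesis using limcc unfolding fn Vcc cpn .
  qed
  then have Ccc: "SS kap w psic psic1 psic psic1 0 = of_real ((kap + (kstar + k0)\<^sup>2) * rho\<^sup>2)"
    using tendsto_const_iff[OF trivial_limit_at_top_linorder] by (metis of_real_mult)
  have E2: "kap * (norm (psic x))\<^sup>2 + (norm (psic1 x + \<i> * of_real (w x) * psic x))\<^sup>2 = 2*kstar*rho\<^sup>2*(kstar+k0)"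
  proof -
    have "of_real (kap * (norm (psic x))\<^sup>2 + (norm (psic1 x + \<i> * of_real (w x) * psic x))\<^sup>2)
       = (of_real ((kap + (kstar + k0)\<^sup>2) * rho\<^sup>2) :: complex)"
      using Scc_c[of x] Ccc SS_diag by metis
    then have "kap * (norm (psic x))\<^sup>2 + (norm (psic1 x + \<i> * of_real (w x) * psic x))\<^sup>2 = (kap + (kstar + k0)\<^sup>2) * rho\<^sup>2"
      using of_real_eq_iff by blast
    then show ?thesis unfolding kap_def by (simp add: algebra_simps power2_eq_square)
  qed
  have Scl: "norm (SS kap w psic psic1 psil psil1 y) = norm (SS kap w pc pc1 pl pl1 y)" for y
  proof -
    have "SS kap w psic psic1 psil psil1 y = (Ec y * cnj (El y)) * SS kap w pc pc1 pl pl1 y"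
      by (rule SS_factor; rule c_dec l_dec)
    then show ?thesis by (simp add: norm_mult El_def Ec_def)
  qed
  have Scl_c: "SS kap w psic psic1 psil psil1 y = SS kap w psic psic1 psil psil1 0" for y
    unfolding kap_def by (rule SS_const[OF wd assms(11) assms(10)])
  have "((\<lambda>y. SS kap w pc pc1 pl pl1 y) \<longlongrightarrow>
      of_real kap * cp * cnj ap + (\<i> * complex_of_real (- kstar) * cp + \<i> * complex_of_real (- k0) * cp)
        * cnj (\<i> * complex_of_real kstar * ap + \<i> * complex_of_real (- k0) * ap)) at_top"
    unfolding SS_def by (intro tendsto_intros tc tl tw)
  moreover have "of_real kap * cp * cnj ap + (\<i> * complex_of_real (- kstar) * cp + \<i> * complex_of_real (- k0) * cp)
        * cnj (\<i> * complex_of_real kstar * ap + \<i> * complex_of_real (- k0) * ap) = 0"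
    unfolding kap_def by (simp add: algebra_simps power2_eq_square)
  ultimately have "((\<lambda>y. norm (SS kap w pc pc1 pl pl1 y)) \<longlongrightarrow> 0) at_top"
    using tendsto_norm by fastforce
  then have "((\<lambda>y::real. norm (SS kap w psic psic1 psil psil1 0)) \<longlongrightarrow> 0) at_top"
  proof -
    have fn: "(\<lambda>y. norm (SS kap w pc pc1 pl pl1 y)) = (\<lambda>y. norm (SS kap w psic psic1 psil psil1 0))"
      by (intro ext) (metis Scl Scl_c)
    show ?thesis using \<open>((\<lambda>y. norm (SS kap w pc pc1 pl pl1 y)) \<longlongrightarrow> 0) at_top\<close> unfolding fn .
  qed
  then have "norm (SS kap w psic psic1 psil psil1 0) = 0"
    using tendsto_const_iff[OF trivial_limit_at_top_linorder] by blast
  then have "SS kap w psic psic1 psil psil1 x = 0" using Scl_c[of x] by simp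
  then have z: "of_real kap * psic x * cnj (psil x) = - ((psic1 x + \<i> * of_real (w x) * psic x) * cnj (psil1 x + \<i> * of_real (w x) * psil x))"
    unfolding SS_def by (simp add: add_eq_0_iff)
  have "norm (of_real kap * psic x * cnj (psil x)) = norm ((psic1 x + \<i> * of_real (w x) * psic x) * cnj (psil1 x + \<i> * of_real (w x) * psil x))"
    using z by simp
  then have "\<bar>kap\<bar> * norm (psic x) * norm (psil x) = norm (psic1 x + \<i> * of_real (w x) * psic x) * norm (psil1 x + \<i> * of_real (w x) * psil x)"
    by (simp only: norm_mult complex_mod_cnj norm_of_real)
  then have E3: "kap\<^sup>2 * (norm (psic x))\<^sup>2 * (norm (psil x))\<^sup>2 = (norm (psic1 x + \<i> * of_real (w x) * psic x))\<^sup>2 * (norm (psil1 x + \<i> * of_real (w x) * psil x))\<^sup>2"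
    by (metis power_mult_distrib power2_abs)
  show "(norm (psic x))\<^sup>2 + (norm (psil x))\<^sup>2
            + (k0 / kstar) * ((norm (psil x))\<^sup>2 - (norm (psic x))\<^sup>2) = 2 * rho\<^sup>2"
    by (rule final_alg[OF kap_def kap0 assms(6) assms(9) E1 E2 E3])
qed

end
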